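(* Let $\Sigma$ be the system $x(t+1)=Ax(t)+Bu(t)+Gw(t)$, $y(t)=Cx(t)+\nu(t)$ as in the context, with $x\in\mathbb R^n$, and let $R\in\mathbb R^{r\times n}$ satisfy $\mathrm{im}(\mathcal{R}each(A,G))\cap\ker(R)=\{0\}$. Then for every $t\in\mathbb N$, every initial state $x^0\in\mathbb R^n$, every input sequence $\mathbf u$ and every measurable set $\overline X\subseteq\mathrm{supp}(\mathbf x|_{x^0,\mathbf u}(t))$, $$\mathbf P(R\,\mathbf x|_{x^0,\mathbf u}(t)\in R\overline X\mid x^0)=\mathbf P(\mathbf x|_{x^0,\mathbf u}(t)\in\overline X\mid x^0).$$
   Context: $\Sigma$: $x(t+1)=Ax(t)+Bu(t)+Gw(t)$, $y(t)=Cx(t)+\nu(t)$, $t\in\mathbb N$, $x\in\mathbb R^n$, $u\in\mathbb R^m$, $w\in\mathbb R^l$, $y,\nu\in\mathbb R^p$, where $(w(t))_t$ is i.i.d. $\mathcal N(\mu,I_l)$, $(\nu(t))_t$ is i.i.d. $\mathcal N(0,\Psi)$, mutually independent. For a deterministic initial state $x^0$ and deterministic input $\mathbf u:\mathbb N\to\mathbb R^m$, $\mathbf x|_{x^0,\mathbf u}(t)=A^tx^0+\sum_{\tau=0}^{t-1}A^{t-1-\tau}(Bu(\tau)+Gw(\tau))$; $\mathbf P(\cdot\mid x^0)$ is probability for the process started at $x^0$. $\mathrm{supp}(v)=\{z:\mathbf P(v\in B_\rho(z))>0\ \forall\rho>0\}$. $\mathcal{R}each_t(A,G)=[G\ AG\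 \cdots\ A^{t-1}G]$ and $\mathcal{R}each(A,G)=\mathcal{R}each_n(A,G)$. $R\overline X=\{Rx:x\in\overline X\}$. *)

theory Defs
  imports "HOL-Probability.Probability"
begin

primrec matpow :: "real^'n^'n \<Rightarrow> nat \<Rightarrow> real^'n^'n" where
  "matpow A 0 = mat 1"
| "matpow A (Suc k) = A ** matpow A k"

text \<open>Image of the block matrix Reach_t(A,G) = [G AG ... A^(t-1)G]:
  the set of all products [G AG ... A^(t-1)G] (v_0; ...; v_(t-1)).\<close>
definition reach_im :: "nat \<Rightarrow> real^'n^'n \<Rightarrow> real^'l^'n \<Rightarrow> (real^'n) set" where
  "reach_im t A G = {\<Sum>k<t. (matpow A k ** G) *v v k | v. True}"

definition Reach_im :: "real^'n^'n \<Rightarrow> real^'l^'n \<Rightarrow> (real^'n) set" where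
  "Reach_im A G = reach_im CARD('n) A G"

definition mat_ker :: "real^'n^'r \<Rightarrow> (real^'n) set" where
  "mat_ker R = {x. R *v x = 0}"

definition gauss_id_density :: "real^'l \<Rightarrow> real^'l \<Rightarrow> real" where
  "gauss_id_density \<mu> v = (\<Prod>i\<in>UNIV. normal_density (\<mu> $ i) 1 (v $ i))"

definition state ::
  "real^'n^'n \<Rightarrow> real^'m^'n \<Rightarrow> real^'l^'n \<Rightarrow> real^'n \<Rightarrow> (nat \<Rightarrow> real^'m)
     \<Rightarrow> (nat \<Rightarrow> 'w \<Rightarrow> real^'l) \<Rightarrow> nat \<Rightarrow> 'w \<Rightarrow> real^'n" where
  "state A B G x0 u w t \<omega> =
     matpow A t *v x0 + (\<Sum>\<tau><t. matpow A (t - 1 - \<tau>) *v (B *v u \<tau> + G *v w \<tau> \<omega>))"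

definition supp :: "'w measure \<Rightarrow> ('w \<Rightarrow> 'a::metric_space) \<Rightarrow> 'a set" where
  "supp M X = {z. \<forall>\<rho>>0. measure M {\<omega>\<in>space M. X \<omega> \<in> ball z \<rho>} > 0}"

end

theory Submission
  imports Defs
begin

lemma reach_im_subspace: "subspace (reach_im k A G)"
  unfolding subspace_def reach_im_def
proof (intro conjI ballI allI)
  show "0 \<in> {\<Sum>i<k. (matpow A i ** G) *v v i | v. True}"
    by (rule CollectI, rule exI[of _ "\<lambda>_. 0"]) simp
next
  fix x y assume "x \<in> {\<Sum>i<k. (matpow A i ** G) *v v i | v. True}"
    "y \<in> {\<Sum>i<k. (matpow A i ** G) *v v i | v. True}"
  then obtain v v' where "x = (\<Sum>i<k. (matpow A i ** G) *v v i)"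
    "y = (\<Sum>i<k. (matpow A i ** G) *v v' i)" by blast
  then have eq: "x + y = (\<Sum>i<k. (matpow A i ** G) *v (\<lambda>i. v i + v' i) i)"
    by (simp add: matrix_vector_right_distrib sum.distrib)
  show "x + y \<in> {\<Sum>i<k. (matpow A i ** G) *v v i | v. True}"
    by (rule CollectI, rule exI[of _ "\<lambda>i. v i + v' i"], rule conjI[OF eq TrueI])
next
  fix c :: real and x assume "x \<in> {\<Sum>i<k. (matpow A i ** G) *v v i | v. True}"
  then obtain v where "x = (\<Sum>i<k. (matpow A i ** G) *v v i)" by blast
  then have eq: "c *\<^sub>R x = (\<Sum>i<k. (matpow A i ** G) *v (\<lambda>i. c *\<^sub>R v i) i)"
    by (simp add: matrix_vector_mult_scaleR scaleR_sum_right)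
  show "c *\<^sub>R x \<in> {\<Sum>i<k. (matpow A i ** G) *v v i | v. True}"
    by (rule CollectI, rule exI[of _ "\<lambda>i. c *\<^sub>R v i"], rule conjI[OF eq TrueI])
qed

lemma reach_im_term:
  assumes "j < k"
  shows "(matpow A j ** G) *v y \<in> reach_im k A G"
proof -
  have eq0: "(\<Sum>i<k. (matpow A i ** G) *v (\<lambda>i. if i = j then y else 0) i) = (matpow A j ** G) *v y"
  proof -
    have "(\<Sum>i<k. (matpow A i ** G) *v (\<lambda>i. if i = j then y else 0) i)
        = (\<Sum>i<k. if i = j then (matpow A j ** G) *v y else 0)"
      by (rule sum.cong) auto
    also have "\<dots> = (matpow A j ** G) *v y" using assms by (simp add: sum.delta)
    finally show ?thesis .
  qed
  note eq = eq0[symmetric]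
  show ?thesis unfolding reach_im_def
    by (rule CollectI, rule exI[of _ "\<lambda>i. if i = j then y else 0"], rule conjI[OF eq TrueI])
qed

lemma reach_im_Suc:
  "reach_im (Suc k) A G = {G *v a + A *v y | a y. y \<in> reach_im k A G}"
proof
  show "reach_im (Suc k) A G \<subseteq> {G *v a + A *v y | a y. y \<in> reach_im k A G}"
  proof
    fix x assume "x \<in> reach_im (Suc k) A G"
    then obtain v where x: "x = (\<Sum>i<Suc k. (matpow A i ** G) *v v i)"
      unfolding reach_im_def by blast
    have "x = G *v v 0 + (\<Sum>i<k. (matpow A (Suc i) ** G) *v v (Suc i))"
      unfolding x sum.lessThan_Suc_shift by simp
    also have "(\<Sum>i<k. (matpow A (Suc i) ** G) *v v (Suc i))
        = A *v (\<Sum>i<k. (matpow A i ** G) *v v (Suc i))"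
      by (simp add: vec.sum matrix_mul_assoc matrix_vector_mul_assoc)
    finally have e1: "x = G *v v 0 + A *v (\<Sum>i<k. (matpow A i ** G) *v v (Suc i))" .
    have e2: "(\<Sum>i<k. (matpow A i ** G) *v v (Suc i)) \<in> reach_im k A G"
      unfolding reach_im_def
      by (rule CollectI, rule exI[of _ "\<lambda>i. v (Suc i)"], rule conjI[OF refl TrueI])
    show "x \<in> {G *v a + A *v y | a y. y \<in> reach_im k A G}"
      by (rule CollectI, rule exI[of _ "v 0"],
          rule exI[of _ "\<Sum>i<k. (matpow A i ** G) *v v (Suc i)"], rule conjI[OF e1 e2])
  qed
next
  show "{G *v a + A *v y | a y. y \<in> reach_im k A G} \<subseteq> reach_im (Suc k) A G"
  proof
    fix x assume "x \<in> {G *v a + A *v y | a y. y \<in> reach_im k A G}"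
    then obtain a y where x1: "x = G *v a + A *v y" and y: "y \<in> reach_im k A G"
      by blast
    from y obtain v where y1: "y = (\<Sum>i<k. (matpow A i ** G) *v v i)"
      unfolding reach_im_def by blast
    define v' where "v' = (\<lambda>i. if i = 0 then a else v (i - 1))"
    have "(\<Sum>i<Suc k. (matpow A i ** G) *v v' i) = G *v a + (\<Sum>i<k. (matpow A (Suc i) ** G) *v v i)"
      unfolding sum.lessThan_Suc_shift v'_def by simp
    also have "(\<Sum>i<k. (matpow A (Suc i) ** G) *v v i) = A *v (\<Sum>i<k. (matpow A i ** G) *v v i)"
      by (simp add: vec.sum matrix_mul_assoc matrix_vector_mul_assoc)
    finally have eq: "x = (\<Sum>i<Suc k. (matpow A i ** G) *v v' i)" using x1 y1 by simp
    show "x \<in> reach_im (Suc k) A G" unfolding reach_im_def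
      by (rule CollectI, rule exI[of _ v'], rule conjI[OF eq TrueI])
  qed
qed

lemma reach_im_mono_Suc: "reach_im k A G \<subseteq> reach_im (Suc k) A G"
proof (induction k)
  case 0
  have "reach_im 0 A G = {0}" unfolding reach_im_def by simp
  moreover have "0 \<in> reach_im (Suc 0) A G" using reach_im_subspace subspace_0 by blast
  ultimately show ?case by simp
next
  case (Suc k)
  then show ?case unfolding reach_im_Suc[of "Suc k"] reach_im_Suc[of k] by blast
qed

lemma reach_im_mono: "k \<le> m \<Longrightarrow> reach_im k A G \<subseteq> reach_im m A G"
  by (induction m rule: dec_induct) (use reach_im_mono_Suc in blast)+

lemma reach_im_stable:
  assumes "reach_im k A G = reach_im (Suc k) A G" and "k \<le> m"
  shows "reach_im m A G = reach_im k A G"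
  using assms(2)
proof (induction m rule: dec_induct)
  case base then show ?case by simp
next
  case (step m)
  have "reach_im (Suc m) A G = reach_im (Suc k) A G"
    using step.IH unfolding reach_im_Suc[of m] reach_im_Suc[of k] by simp
  then show ?case using assms(1) by simp
qed

lemma reach_im_dim:
  assumes "\<And>k. k < m \<Longrightarrow> reach_im k A G \<noteq> reach_im (Suc k) A G"
  shows "m \<le> dim (reach_im m A G)"
  using assms
proof (induction m)
  case 0 then show ?case by simp
next
  case (Suc m)
  have "m \<le> dim (reach_im m A G)" using Suc by auto
  moreover have "reach_im m A G \<subset> reach_im (Suc m) A G"
    using reach_im_mono_Suc Suc.prems[of m] by blast
  then have "dim (reach_im m A G) < dim (reach_im (Suc m) A G)"
    by (metis dim_psubset reach_im_subspace span_eq_iff)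
  ultimately show ?case by simp
qed

lemma reach_im_sub_Reach:
  fixes A :: "real^'n^'n" and G :: "real^'l^'n"
  shows "reach_im t A G \<subseteq> Reach_im A G"
proof (cases "t \<le> CARD('n)")
  case True then show ?thesis unfolding Reach_im_def by (rule reach_im_mono)
next
  case False
  let ?n = "CARD('n)"
  have eq: "reach_im ?n A G = reach_im (Suc ?n) A G"
  proof (rule ccontr)
    assume ne: "reach_im ?n A G \<noteq> reach_im (Suc ?n) A G"
    have "reach_im k A G \<noteq> reach_im (Suc k) A G" if "k < Suc ?n" for k
    proof
      assume kk: "reach_im k A G = reach_im (Suc k) A G"
      have k1: "k \<le> ?n" and k2: "k \<le> Suc ?n" using that by auto
      have "reach_im ?n A G = reach_im k A G" "reach_im (Suc ?n) A G = reach_im k A G"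
        by (rule reach_im_stable[OF kk k1], rule reach_im_stable[OF kk k2])
      then show False using ne by simp
    qed
    then have "Suc ?n \<le> dim (reach_im (Suc ?n) A G)" by (rule reach_im_dim)
    moreover have "dim (reach_im (Suc ?n) A G) \<le> ?n" by (rule dim_subset_UNIV_cart)
    ultimately show False by simp
  qed
  have tn: "?n \<le> t" using False by simp
  have "reach_im t A G = reach_im ?n A G" by (rule reach_im_stable[OF eq tn])
  then show ?thesis unfolding Reach_im_def by simp
qed

theorem lemma3:
  fixes M :: "'w measure"
    and A :: "real^'n^'n" and B :: "real^'m^'n" and G :: "real^'l^'n"
    and R :: "real^'n^'r"
    and \<mu> :: "real^'l"
    and w :: "nat \<Rightarrow> 'w \<Rightarrow> real^'l"
    and x0 :: "real^'n" and u :: "nat \<Rightarrow> real^'m"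
    and t :: nat and X :: "(real^'n) set"
  assumes "prob_space M"
    and "\<And>\<tau>. distributed M lborel (w \<tau>) (\<lambda>v. ennreal (gauss_id_density \<mu> v))"
    and "prob_space.indep_vars M (\<lambda>_. borel) w UNIV"
    and "Reach_im A G \<inter> mat_ker R = {0}"
    and "X \<in> sets borel"
    and "X \<subseteq> supp M (state A B G x0 u w t)"
  shows "measure M {\<omega>\<in>space M. R *v state A B G x0 u w t \<omega> \<in> (\<lambda>z. R *v z) ` X}
       = measure M {\<omega>\<in>space M. state A B G x0 u w t \<omega> \<in> X}"
proof -
  let ?x = "state A B G x0 u w t"
  let ?V = "reach_im t A G"
  define c where "c = matpow A t *v x0 + (\<Sum>\<tau><t. matpow A (t - 1 - \<tau>) *v (B *v u \<tau>))"
  have sub: "subspace ?V" by (rule reach_im_subspace)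
  have inV: "?x \<omega> - c \<in> ?V" for \<omega>
  proof -
    have "?x \<omega> - c = (\<Sum>\<tau><t. (matpow A (t - 1 - \<tau>) ** G) *v w \<tau> \<omega>)"
      unfolding state_def c_def
      by (simp add: matrix_vector_right_distrib sum.distrib matrix_vector_mul_assoc)
    also have "\<dots> \<in> ?V"
      by (rule subspace_sum[OF sub]) (rule reach_im_term, auto)
    finally show ?thesis .
  qed
  have Xin: "z - c \<in> ?V" if "z \<in> X" for z
  proof -
    have "z - c \<in> closure ?V"
      unfolding closure_approachable
    proof (intro allI impI)
      fix e :: real assume "e > 0"
      have "measure M {\<omega>\<in>space M. ?x \<omega> \<in> ball z e} > 0"
        using assms(6) that \<open>e > 0\<close> unfolding supp_def by blast
      then obtain \<omega> where "?x \<omega> \<in> ball z e"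
        by (metis (no_types, lifting) Collect_empty_eq less_irrefl measure_empty)
      then have "dist (?x \<omega> - c) (z - c) < e" by (simp add: dist_norm norm_minus_commute)
      then show "\<exists>y\<in>?V. dist y (z - c) < e" using inV by blast
    qed
    then show ?thesis using closed_subspace[OF sub] closure_closed by metis
  qed
  have RV: "reach_im t A G \<subseteq> Reach_im A G" by (rule reach_im_sub_Reach)
  have "{\<omega>\<in>space M. R *v ?x \<omega> \<in> (\<lambda>z. R *v z) ` X} = {\<omega>\<in>space M. ?x \<omega> \<in> X}"
  proof (intro Collect_cong conj_cong refl iffI)
    fix \<omega> assume "R *v ?x \<omega> \<in> (\<lambda>z. R *v z) ` X"
    then obtain z where z: "z \<in> X" "R *v ?x \<omega> = R *v z" by blast
    have "?x \<omega> - z = (?x \<omega> - c) - (z - c)" by simp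
    also have "\<dots> \<in> ?V" using subspace_diff[OF sub inV Xin[OF z(1)]] .
    finally have "?x \<omega> - z \<in> Reach_im A G" using RV by blast
    moreover have "?x \<omega> - z \<in> mat_ker R"
      unfolding mat_ker_def using z(2) by (simp add: matrix_vector_mult_diff_distrib)
    ultimately have "?x \<omega> - z = 0" using assms(4) by blast
    then show "?x \<omega> \<in> X" using z(1) by simp
  qed auto
  then show ?thesis by (simp only:)
qed

end
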